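(* Let $K$ be an imaginary quadratic field of class number $1$, with ring of integers $\mathcal{O}_K\subset\mathbb{C}$, and let $z\in\mathcal{O}_K$, $z\neq 0$. There is a natural number $n$ such that $z^n$ is a real number if and only if $\arg z$ is a multiple of $\pi/4$ when $K=\mathbb{Q}(\sqrt{-1})$, a multiple of $\pi/6$ when $K=\mathbb{Q}(\sqrt{-3})$, and a multiple of $\pi/2$ otherwise. *)

theory Defs
  imports "HOL-Analysis.Analysis" "HOL-Computational_Algebra.Polynomial" "HOL-Computational_Algebra.Squarefree"
begin

definition quad_field :: "int \<Rightarrow> complex set" where
  "quad_field d = {of_rat a + of_rat b * (\<i> * complex_of_real (sqrt (real_of_int (- d)))) | a b. True}"

definition ring_of_integers :: "int \<Rightarrow> complex set" where
  "ring_of_integers d = {x \<in> quad_field d. algebraic_int x}"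

definition is_ideal_OK :: "int \<Rightarrow> complex set \<Rightarrow> bool" where
  "is_ideal_OK d I \<longleftrightarrow> I \<subseteq> ring_of_integers d \<and> 0 \<in> I \<and>
     (\<forall>x\<in>I. \<forall>y\<in>I. x + y \<in> I) \<and> (\<forall>r\<in>ring_of_integers d. \<forall>x\<in>I. r * x \<in> I)"

definition is_principal_OK :: "int \<Rightarrow> complex set \<Rightarrow> bool" where
  "is_principal_OK d I \<longleftrightarrow> (\<exists>a\<in>ring_of_integers d. I = {a * r | r. r \<in> ring_of_integers d})"

definition class_number_one :: "int \<Rightarrow> bool" where
  "class_number_one d \<longleftrightarrow> (\<forall>I. is_ideal_OK d I \<longrightarrow> is_principal_OK d I)"

end

theory Submission
  imports Defs
begin


fun cheb :: "nat \<Rightarrow> real poly" where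
  "cheb 0 = [:2:]"
| "cheb (Suc 0) = [:0, 1:]"
| "cheb (Suc (Suc n)) = pCons 0 (cheb (Suc n)) - cheb n"

lemma cheb_poly: "poly (cheb n) (2 * cos x) = 2 * cos (real n * x)"
proof (induction n rule: cheb.induct)
  case (3 n)
  have e1: "real (Suc (Suc n)) * x = real (Suc n) * x + x" by (simp add: algebra_simps)
  have e2: "real n * x = real (Suc n) * x - x" by (simp add: algebra_simps)
  have "2 * cos (real (Suc (Suc n)) * x) = 2 * cos x * (2 * cos (real (Suc n) * x)) - 2 * cos (real n * x)"
    unfolding e1 e2 cos_add cos_diff by (simp add: algebra_simps)
  then show ?case using 3 by simp
qed simp_all

lemma cheb_coeff_int: "coeff (cheb n) k \<in> \<int>"
proof (induction n arbitrary: k rule: cheb.induct)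
  case 1 then show ?case by (simp add: coeff_pCons split: nat.split)
next
  case 2 then show ?case by (simp add: coeff_pCons split: nat.split)
next
  case (3 n) then show ?case by (auto simp: coeff_pCons split: nat.split)
qed

lemma cheb_coeff_hi: "(\<forall>k>n. coeff (cheb n) k = 0) \<and> coeff (cheb n) n = (if n = 0 then 2 else 1)"
proof (induction n rule: cheb.induct)
  case 1 then show ?case by (simp add: coeff_pCons split: nat.split)
next
  case 2 then show ?case by (simp add: coeff_pCons split: nat.split)
next
  case (3 n) then show ?case by (auto simp: coeff_pCons split: nat.split)
qed

lemma cos_alg_int:
  assumes "n > 0" "cos (real n * x) = 1"
  shows "algebraic_int (2 * cos x)"
proof -
  define p where "p = cheb n - [:2:]"
  have c: "coeff [:2::real:] k = 0" if "k > 0" for k using that by (simp add: coeff_pCons split: nat.split)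
  have hi: "\<forall>k>n. coeff p k = 0" using cheb_coeff_hi[of n] c assms(1) by (simp add: p_def)
  have cn: "coeff p n = 1" using cheb_coeff_hi[of n] c[of n] assms(1) by (simp add: p_def)
  have "degree p = n" using degree_le[OF hi] le_degree[of p n] cn by simp
  then have "lead_coeff p = 1" using cn by simp
  moreover have "\<forall>i. coeff p i \<in> \<int>" using cheb_coeff_int by (simp add: p_def coeff_pCons split: nat.split)
  moreover have "poly p (2 * cos x) = 0" using cheb_poly[of n x] assms(2) by (simp add: p_def)
  ultimately show ?thesis by (intro algebraic_int.intros)
qed

lemma sqf_lemma:
  fixes D :: int and q :: rat
  assumes "squarefree D" "D > 0" "of_int D * q^2 = of_int c" "c = 1 \<or> c = 3"
  shows "D = c"
proof -
  obtain u v where uv: "quotient_of q = (u, v)" by (cases "quotient_of q")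
  have v0: "v > 0" using uv quotient_of_denom_pos by blast
  have cop: "coprime u v" using uv quotient_of_coprime by blast
  have qe: "q = of_int u / of_int v" using uv quotient_of_div by blast
  have "of_int D * (of_int u)^2 = (of_int c * (of_int v)^2 :: rat)"
    using assms(3) v0 unfolding qe by (simp add: field_simps power2_eq_square)
  then have eq: "D * u^2 = c * v^2" by (metis of_int_eq_iff of_int_mult of_int_power)
  have "u^2 dvd c * v^2" using eq by (metis dvd_triv_right)
  moreover have "coprime (u^2) (v^2)" using cop by simp
  ultimately have "u^2 dvd c" using coprime_dvd_mult_left_iff by blast
  moreover have "c > 0" using assms(4) by auto
  ultimately have "u^2 \<le> c" by (simp add: zdvd_imp_le)
  moreover have "u \<noteq> 0" using eq assms(4) v0 by auto
  ultimately have u3: "\<bar>u\<bar> * \<bar>u\<bar> \<le> 3" "\<bar>u\<bar> \<ge> 1" using assms(4)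
    by (auto simp: power2_eq_square abs_mult_self_eq)
  have "\<bar>u\<bar> < 2"
  proof (rule ccontr)
    assume "\<not> \<bar>u\<bar> < 2"
    then have "2 * 2 \<le> \<bar>u\<bar> * \<bar>u\<bar>" by (intro mult_mono) auto
    then show False using u3 by simp
  qed
  then have "\<bar>u\<bar> = 1" using u3 by simp
  then have "u^2 = 1" by (metis abs_power2 power2_eq_square one_power2 power2_abs)
  then have "D = c * v^2" using eq by simp
  then have "v^2 dvd D" by simp
  then have "v dvd 1" using squarefreeD assms(1) by blast
  then have "v = 1" using v0 by auto
  then show ?thesis using \<open>D = c * v^2\<close> by simp
qed

lemma angle_lemma:
  assumes "sin (real m * x) = 0" "m > 0"
  shows "\<exists>k::int. x = of_int k * (pi / real m)"
proof -
  obtain i :: int where "real m * x = of_int i * pi" using assms(1) sin_zero_iff_int2 by blast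
  then have "x = of_int i * (pi / real m)" using assms(2) by (simp add: field_simps)
  then show ?thesis by blast
qed

lemma complex_of_rat_real: "(of_rat q :: complex) = complex_of_real (of_rat q)"
proof -
  obtain u v where uv: "quotient_of q = (u, v)" by (cases "quotient_of q")
  have qe: "q = of_int u / of_int v" using uv quotient_of_div by blast
  show ?thesis unfolding qe by (simp add: of_rat_divide)
qed

lemma cos_sq_sin: "(cos (x::real))^2 = 1 \<Longrightarrow> sin x = 0"
  using sin_cos_squared_add[of x] by simp

theorem theorem4p1:
  fixes d :: int and z :: complex
  assumes "squarefree d" and "d < 0" and "class_number_one d"
    and "z \<in> ring_of_integers d" and "z \<noteq> 0"
  shows "(\<exists>n::nat. n > 0 \<and> z ^ n \<in> \<real>) \<longleftrightarrow>
    (if d = -1 then (\<exists>k::int. Arg z = of_int k * (pi / 4))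
     else if d = -3 then (\<exists>k::int. Arg z = of_int k * (pi / 6))
     else (\<exists>k::int. Arg z = of_int k * (pi / 2)))"
proof -
  define D where "D = - d"
  have Dpos: "D > 0" using assms(2) by (simp add: D_def)
  have sqD: "squarefree D" using assms(1) by (simp add: D_def)
  define s where "s = sqrt (real_of_int D)"
  have s2: "s^2 = real_of_int D" using Dpos by (simp add: s_def)
  from assms(4) obtain a b :: rat where zab: "z = of_rat a + of_rat b * (\<i> * complex_of_real s)"
    unfolding ring_of_integers_def quad_field_def D_def s_def by auto
  have Rez: "Re z = real_of_rat a" and Imz: "Im z = real_of_rat b * s" using zab by (simp_all add: complex_of_rat_real)
  define \<theta> where "\<theta> = Arg z"
  have zr: "rcis (cmod z) \<theta> = z" by (simp add: rcis_cmod_Arg \<theta>_def)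
  have cpos: "cmod z > 0" using assms(5) by simp
  have cosA: "cos \<theta> = Re z / cmod z" using arg_cong[OF zr, of Re] cpos by (simp add: field_simps)
  have sinA: "sin \<theta> = Im z / cmod z" using arg_cong[OF zr, of Im] cpos by (simp add: field_simps)
  have cm2: "(cmod z)^2 = (Re z)^2 + (Im z)^2" by (rule cmod_power2)
  define N where "N = a^2 + b^2 * of_int D"
  have NR: "(cmod z)^2 = real_of_rat N" unfolding cm2 Rez Imz N_def
    by (simp add: power_mult_distrib s2 of_rat_add of_rat_mult of_rat_power)
  have N0: "N \<noteq> 0" using NR cpos by (metis of_rat_0 zero_less_power less_irrefl)
  define u where "u = 2 * cos (2 * \<theta>)"
  have u_rat: "u = real_of_rat (2 * (a^2 - b^2 * of_int D) / N)"
  proof -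
    have "u = 2 * ((Re z)^2 - (Im z)^2) / (cmod z)^2"
      unfolding u_def cos_double cosA sinA using cpos by (simp add: field_simps power2_eq_square)
    also have "\<dots> = real_of_rat (2 * (a^2 - b^2 * of_int D) / N)"
      unfolding NR Rez Imz by (simp add: power_mult_distrib s2 of_rat_diff of_rat_mult of_rat_power of_rat_divide)
    finally show ?thesis .
  qed
  have half: "\<exists>k::int. \<theta> = of_int k * (pi / 2) \<Longrightarrow>
     (\<exists>k::int. \<theta> = of_int k * (pi / 4)) \<and> (\<exists>k::int. \<theta> = of_int k * (pi / 6))"
  proof -
    assume "\<exists>k::int. \<theta> = of_int k * (pi / 2)"
    then obtain k :: int where k: "\<theta> = of_int k * (pi / 2)" by blast
    have "\<theta> = of_int (2*k) * (pi / 4)" "\<theta> = of_int (3*k) * (pi / 6)" using k by simp_all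
    then show ?thesis by blast
  qed
  show ?thesis
  proof
    assume "\<exists>n::nat. n > 0 \<and> z ^ n \<in> \<real>"
    then obtain n :: nat where n: "n > 0" "z ^ n \<in> \<real>" by blast
    have "z ^ n = rcis (cmod z ^ n) (real n * \<theta>)" using zr DeMoivre2 by metis
    then have "Im (z ^ n) = cmod z ^ n * sin (real n * \<theta>)" by simp
    then have "sin (real n * \<theta>) = 0" using n(2) cpos by (simp add: complex_is_Real_iff)
    then have "cos (real n * (2 * \<theta>)) = 1"
      using cos_double_sin[of "real n * \<theta>"] by (simp add: algebra_simps)
    then have ai: "algebraic_int u" unfolding u_def by (rule cos_alg_int[OF n(1)])
    have "u \<in> \<rat>" unfolding u_rat by simp
    then have "u \<in> \<int>" using ai rational_algebraic_int_is_int by blast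
    then obtain k :: int where k: "u = of_int k" by (auto elim: Ints_cases)
    have "\<bar>u\<bar> \<le> 2" unfolding u_def abs_mult using abs_cos_le_one[of "2*\<theta>"] by simp
    then have kr: "-2 \<le> k \<and> k \<le> 2" using k by linarith
    have kq: "2 * (a^2 - b^2 * of_int D) / N = of_int k"
      using u_rat k by (metis of_rat_eq_iff of_rat_of_int_eq)
    then have kq': "2 * (a^2 - b^2 * of_int D) = of_int k * N" using N0 by (simp add: field_simps)
    have cosu: "cos (2*\<theta>) = of_int k / 2" using k unfolding u_def by simp
    consider "k = 2 \<or> k = -2" | "k = 0" | "k = 1 \<or> k = -1" using kr by linarith
    then show "(if d = -1 then (\<exists>k::int. Arg z = of_int k * (pi / 4))
     else if d = -3 then (\<exists>k::int. Arg z = of_int k * (pi / 6))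
     else (\<exists>k::int. Arg z = of_int k * (pi / 2)))"
    proof cases
      case 1
      then have "(cos (real 1 * (2*\<theta>)))^2 = 1" using cosu by auto
      then have "sin (real 2 * \<theta>) = 0" using cos_sq_sin by simp
      then have "\<exists>k::int. \<theta> = of_int k * (pi / 2)" using angle_lemma[of 2 \<theta>] by simp
      then show ?thesis using half unfolding \<theta>_def by auto
    next
      case 2
      have "cos (2 * (2*\<theta>)) = -1" using cos_double_cos[of "2*\<theta>"] cosu 2 by simp
      then have "(cos (real 4 * \<theta>))^2 = 1" by (simp add: mult.assoc[symmetric])
      then have "sin (real 4 * \<theta>) = 0" using cos_sq_sin by blast
      then have ex: "\<exists>k::int. \<theta> = of_int k * (pi / 4)" using angle_lemma[of 4 \<theta>] by simp
      have "a^2 = b^2 * of_int D" using kq' 2 by simp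
      moreover have "b \<noteq> 0" using N0 calculation unfolding N_def by auto
      moreover have "a \<noteq> 0" using calculation Dpos by auto
      ultimately have "of_int D * (b/a)^2 = of_int 1" using Dpos by (simp add: field_simps)
      then have "D = 1" using sqf_lemma[OF sqD Dpos] by blast
      then have "d = -1" by (simp add: D_def)
      then show ?thesis using ex unfolding \<theta>_def by simp
    next
      case 3
      have "cos (3 * (2*\<theta>)) = 1 \<or> cos (3 * (2*\<theta>)) = -1"
        using cos_treble_cos[of "2*\<theta>"] cosu 3 by (auto simp: power3_eq_cube)
      then have "(cos (real 6 * \<theta>))^2 = 1" by (auto simp: mult.assoc[symmetric])
      then have "sin (real 6 * \<theta>) = 0" using cos_sq_sin by blast
      then have ex: "\<exists>k::int. \<theta> = of_int k * (pi / 6)" using angle_lemma[of 6 \<theta>] by simp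
      have "D = 3"
      proof (cases "k = 1")
        case True
        then have e: "a^2 = 3 * b^2 * of_int D" using kq' unfolding N_def by (simp add: algebra_simps)
        have "b \<noteq> 0" using N0 e unfolding N_def by auto
        moreover have "a \<noteq> 0" using e Dpos \<open>b \<noteq> 0\<close> by auto
        ultimately have "of_int D * (3*b/a)^2 = of_int 3" using e Dpos by (simp add: field_simps power2_eq_square)
        then show ?thesis using sqf_lemma[OF sqD Dpos] by blast
      next
        case False
        then have e: "3 * a^2 = b^2 * of_int D" using kq' 3 unfolding N_def by (simp add: algebra_simps)
        have "b \<noteq> 0" using N0 e unfolding N_def by auto
        then have "of_int D * (3*a/(of_int D * b))^2 = of_int 3" using e Dpos
          by (simp add: field_simps power2_eq_square)
        then show ?thesis using sqf_lemma[OF sqD Dpos] by blast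
      qed
      then have "d = -3" by (simp add: D_def)
      then show ?thesis using ex unfolding \<theta>_def by simp
    qed
  next
    assume H: "(if d = -1 then (\<exists>k::int. Arg z = of_int k * (pi / 4))
     else if d = -3 then (\<exists>k::int. Arg z = of_int k * (pi / 6))
     else (\<exists>k::int. Arg z = of_int k * (pi / 2)))"
    have "\<exists>j::int. 12 * \<theta> = of_int j * pi"
    proof -
      consider k :: int where "\<theta> = of_int k * (pi / 4)" | k :: int where "\<theta> = of_int k * (pi / 6)"
        | k :: int where "\<theta> = of_int k * (pi / 2)"
        using H unfolding \<theta>_def by (auto split: if_splits)
      then show ?thesis
      proof cases
        case (1 k) then have "12 * \<theta> = of_int (3*k) * pi" by (simp add: algebra_simps)
        then show ?thesis by blast
      next
        case (2 k) then have "12 * \<theta> = of_int (2*k) * pi" by (simp add: algebra_simps)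
        then show ?thesis by blast
      next
        case (3 k) then have "12 * \<theta> = of_int (6*k) * pi" by (simp add: algebra_simps)
        then show ?thesis by blast
      qed
    qed
    then obtain j :: int where j: "12 * \<theta> = of_int j * pi" by blast
    have "z ^ 12 = rcis (cmod z ^ 12) (real 12 * \<theta>)" using zr DeMoivre2 by metis
    then have "Im (z ^ 12) = cmod z ^ 12 * sin (of_int j * pi)" using j by simp
    then have "Im (z ^ 12) = 0" using sin_times_pi_eq_0[of "of_int j"] by simp
    then have "z ^ 12 \<in> \<real>" by (simp add: complex_is_Real_iff)
    then show "\<exists>n::nat. n > 0 \<and> z ^ n \<in> \<real>" by (intro exI[of _ 12]) simp
  qed
qed

end
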